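(* Let $x\in\mathbb R^N$ be a vector with block structure $\mathcal B=(\mathcal B_1,\dots,\mathcal B_B)$ and let $\omega=(\omega_1,\dots,\omega_B)$ be weights with $\omega_b\ge 1$. Let $s>\|\omega\|_\infty^2$. Then for $q<p\le 2$ and any norm $\|\cdot\|_r$ used on the blocks, $$\sigma_s(x)_{r,p}^{(\omega)}\le \widetilde\sigma_s(x)_{r,p}^{(\omega)}\le (s-\|\omega\|_\infty^2)^{\frac1p-\frac1q}\,\|x\|_{r,q}^{(\omega)}.$$
   Context: Block structure: $\mathcal B=(\mathcal B_1,\dots,\mathcal B_B)$ is a partition of $\{1,\dots,N\}$; for $x\in\mathbb R^N$, $x[b]=x[\mathcal B_b]$ is the restriction of $x$ to block $b$; for $S\subseteq\{1,\dots,B\}$, $x[S]$ is the vector equal to $x$ on the blocks indexed by $S$ and $0$ elsewhere. Weights $\omega_b\ge1$, $\|\omega\|_\infty=\max_b\omega_b$, $\omega(S)=\sum_{b\in S}\omega_b^2$. For $p>0$ and a block norm $\|\cdot\|_r$: $\|x\|_{r,p}^{(\omega)}=\big(\sum_{b}\omega_b^{2-p}\|x[b]\|_r^p\big)^{1/p}$. Weighted block sparsity: $\|x\|_0^{(\omega)}=\omega(\{b:x[b]\neq0\})$. Best weighted $s$-block approximation error: $\sigma_s(x)_{r,p}^{(\omega)}=\inf\{\|x-z\|_{r,p}^{(\omega)}:\|z\|_0^{(\omega)}\le s\}$. Quasi-best approximation: let $\pi$ be a permutation of $\{1,\dots,B\}$ with $\|x[\pi(1)]\|_r/\omega_{\pi(1)}\ge\|x[\pi(2)]\|_r/\omega_{\pi(2)}\ge\cdots$;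 for $s\ge\|\omega\|_\infty^2$ let $k_s=\max\{k:\sum_{i=1}^k\omega_{\pi(i)}^2\le s\}$, $S=\{\pi(1),\dots,\pi(k_s)\}$, and $\widetilde\sigma_s(x)_{r,p}^{(\omega)}=\|x-x[S]\|_{r,p}^{(\omega)}$. *)

theory Defs
  imports Complex_Main
begin

definition is_vec :: "nat \<Rightarrow> (nat \<Rightarrow> real) \<Rightarrow> bool" where
  "is_vec N x \<longleftrightarrow> (\<forall>i\<ge>N. x i = 0)"

definition block_partition :: "nat \<Rightarrow> nat \<Rightarrow> (nat \<Rightarrow> nat set) \<Rightarrow> bool" where
  "block_partition N B blk \<longleftrightarrow>
     (\<forall>b<B. blk b \<noteq> {}) \<and>
     (\<forall>b<B. \<forall>c<B. b \<noteq> c \<longrightarrow> blk b \<inter> blk c = {}) \<and>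
     (\<Union>b<B. blk b) = {..<N}"

definition is_norm_on :: "nat \<Rightarrow> ((nat \<Rightarrow> real) \<Rightarrow> real) \<Rightarrow> bool" where
  "is_norm_on N nrm \<longleftrightarrow>
     (\<forall>v. is_vec N v \<longrightarrow> nrm v \<ge> 0 \<and> (nrm v = 0 \<longleftrightarrow> v = (\<lambda>_. 0))) \<and>
     (\<forall>v c. is_vec N v \<longrightarrow> nrm (\<lambda>i. c * v i) = \<bar>c\<bar> * nrm v) \<and>
     (\<forall>v w. is_vec N v \<longrightarrow> is_vec N w \<longrightarrow> nrm (\<lambda>i. v i + w i) \<le> nrm v + nrm w)"

definition restr :: "(nat \<Rightarrow> nat set) \<Rightarrow> nat set \<Rightarrow> (nat \<Rightarrow> real) \<Rightarrow> nat \<Rightarrow> real" where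
  "restr blk S x = (\<lambda>i. if (\<exists>b\<in>S. i \<in> blk b) then x i else 0)"

definition blockv :: "(nat \<Rightarrow> nat set) \<Rightarrow> nat \<Rightarrow> (nat \<Rightarrow> real) \<Rightarrow> nat \<Rightarrow> real" where
  "blockv blk b x = restr blk {b} x"

definition winf :: "nat \<Rightarrow> (nat \<Rightarrow> real) \<Rightarrow> real" where
  "winf B \<omega> = Max (insert 0 (\<omega> ` {..<B}))"

definition wset :: "(nat \<Rightarrow> real) \<Rightarrow> nat set \<Rightarrow> real" where
  "wset \<omega> S = (\<Sum>b\<in>S. (\<omega> b)\<^sup>2)"

definition wnorm :: "nat \<Rightarrow> (nat \<Rightarrow> nat set) \<Rightarrow> ((nat \<Rightarrow> real) \<Rightarrow> real) \<Rightarrow> (nat \<Rightarrow> real)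
                      \<Rightarrow> real \<Rightarrow> (nat \<Rightarrow> real) \<Rightarrow> real" where
  "wnorm B blk nrm \<omega> p x =
     (\<Sum>b<B. \<omega> b powr (2 - p) * nrm (blockv blk b x) powr p) powr (1 / p)"

definition wsparsity :: "nat \<Rightarrow> (nat \<Rightarrow> nat set) \<Rightarrow> (nat \<Rightarrow> real) \<Rightarrow> (nat \<Rightarrow> real) \<Rightarrow> real" where
  "wsparsity B blk \<omega> x = wset \<omega> {b. b < B \<and> blockv blk b x \<noteq> (\<lambda>_. 0)}"

definition sigma_best :: "nat \<Rightarrow> nat \<Rightarrow> (nat \<Rightarrow> nat set) \<Rightarrow> ((nat \<Rightarrow> real) \<Rightarrow> real)
                      \<Rightarrow> (nat \<Rightarrow> real) \<Rightarrow> real \<Rightarrow> real \<Rightarrow> (nat \<Rightarrow> real) \<Rightarrow> real" where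
  "sigma_best N B blk nrm \<omega> p s x =
     Inf {wnorm B blk nrm \<omega> p (\<lambda>i. x i - z i) | z. is_vec N z \<and> wsparsity B blk \<omega> z \<le> s}"

definition sorting_perm :: "nat \<Rightarrow> (nat \<Rightarrow> nat set) \<Rightarrow> ((nat \<Rightarrow> real) \<Rightarrow> real)
                      \<Rightarrow> (nat \<Rightarrow> real) \<Rightarrow> (nat \<Rightarrow> real) \<Rightarrow> (nat \<Rightarrow> nat) \<Rightarrow> bool" where
  "sorting_perm B blk nrm \<omega> x \<pi> \<longleftrightarrow>
     bij_betw \<pi> {..<B} {..<B} \<and>
     (\<forall>i j. i \<le> j \<longrightarrow> j < B \<longrightarrow>
        nrm (blockv blk (\<pi> j) x) / \<omega> (\<pi> j) \<le> nrm (blockv blk (\<pi> i) x) / \<omega> (\<pi> i))"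

text \<open>k_s (positions are 0-based: the first k entries are \<pi> 0, ..., \<pi> (k-1)).\<close>
definition k_s :: "nat \<Rightarrow> (nat \<Rightarrow> real) \<Rightarrow> (nat \<Rightarrow> nat) \<Rightarrow> real \<Rightarrow> nat" where
  "k_s B \<omega> \<pi> s = Max {k. k \<le> B \<and> (\<Sum>i<k. (\<omega> (\<pi> i))\<^sup>2) \<le> s}"

definition sigma_quasi :: "nat \<Rightarrow> (nat \<Rightarrow> nat set) \<Rightarrow> ((nat \<Rightarrow> real) \<Rightarrow> real)
                      \<Rightarrow> (nat \<Rightarrow> real) \<Rightarrow> (nat \<Rightarrow> nat) \<Rightarrow> real \<Rightarrow> real \<Rightarrow> (nat \<Rightarrow> real) \<Rightarrow> real" where
  "sigma_quasi B blk nrm \<omega> \<pi> p s x =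
     (let S = \<pi> ` {..<k_s B \<omega> \<pi> s}
      in wnorm B blk nrm \<omega> p (\<lambda>i. x i - restr blk S x i))"

end

theory Submission
  imports Defs
begin

lemma tail_bound:
  fixes c a :: "nat \<Rightarrow> real" and k B :: nat and T p q :: real
  assumes kB: "k < B" and cpos: "\<forall>i<B. c i > 0" and anon: "\<forall>i<B. a i \<ge> 0"
    and mono: "\<forall>i j. i \<le> j \<longrightarrow> j < B \<longrightarrow> a j \<le> a i"
    and T0: "0 < T" and Tle: "T \<le> (\<Sum>i\<le>k. c i)" and q0: "0 < q" and qp: "q < p"
  shows "(\<Sum>i\<in>{k..<B}. c i * a i powr p) powr (1/p)
          \<le> T powr (1/p - 1/q) * (\<Sum>i<B. c i * a i powr q) powr (1/q)"
proof -
  define m where "m = a k"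
  define Q where "Q = (\<Sum>i<B. c i * a i powr q)"
  define P where "P = (\<Sum>i\<in>{k..<B}. c i * a i powr p)"
  have m0: "m \<ge> 0" using anon kB m_def by auto
  have Q0: "Q \<ge> 0" unfolding Q_def using cpos by (intro sum_nonneg) (auto intro: mult_nonneg_nonneg less_imp_le)
  have P0: "P \<ge> 0" unfolding P_def using cpos by (intro sum_nonneg) (auto intro: mult_nonneg_nonneg less_imp_le)
  have "m powr q * T \<le> m powr q * (\<Sum>i\<le>k. c i)" using Tle by (intro mult_left_mono) auto
  also have "\<dots> = (\<Sum>i\<le>k. c i * m powr q)" by (simp add: sum_distrib_left mult.commute)
  also have "\<dots> \<le> (\<Sum>i\<le>k. c i * a i powr q)"
  proof (intro sum_mono mult_left_mono)
    fix i assume i: "i \<in> {..k}"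
    then have iB: "i < B" using kB by auto
    show "m powr q \<le> a i powr q" using mono i iB m0 q0 kB unfolding m_def
      by (intro powr_mono2) (auto simp: less_imp_le)
    show "0 \<le> c i" using cpos iB by auto
  qed
  also have "\<dots> \<le> Q" unfolding Q_def using kB cpos
    by (intro sum_mono2) (auto intro: mult_nonneg_nonneg less_imp_le)
  finally have h1: "m powr q * T \<le> Q" .
  hence h1': "m powr q \<le> Q / T" using T0 by (simp add: field_simps)
  have "P \<le> (\<Sum>i\<in>{k..<B}. m powr (p - q) * (c i * a i powr q))" unfolding P_def
  proof (intro sum_mono)
    fix i assume i: "i \<in> {k..<B}"
    have "a i powr p = a i powr (p - q) * a i powr q" by (simp add: powr_add[symmetric])
    moreover have "a i powr (p - q) \<le> m powr (p - q)" using mono i anon qp unfolding m_def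
      by (intro powr_mono2) (auto simp: less_imp_le)
    ultimately show "c i * a i powr p \<le> m powr (p - q) * (c i * a i powr q)"
    proof -
      have "c i * a i powr p = (c i * a i powr q) * a i powr (p - q)"
        using \<open>a i powr p = _\<close> by (simp add: mult_ac)
      also have "\<dots> \<le> (c i * a i powr q) * m powr (p - q)"
        using cpos i \<open>a i powr (p - q) \<le> _\<close> by (intro mult_left_mono) (auto intro: less_imp_le)
      finally show ?thesis by (simp add: mult_ac)
    qed
  qed
  also have "\<dots> = m powr (p - q) * (\<Sum>i\<in>{k..<B}. c i * a i powr q)" by (simp add: sum_distrib_left)
  also have "\<dots> \<le> m powr (p - q) * Q" unfolding Q_def using kB cpos
    by (intro mult_left_mono sum_mono2) (auto intro: mult_nonneg_nonneg less_imp_le)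
  also have "m powr (p - q) = (m powr q) powr ((p - q) / q)" using q0 by (simp add: powr_powr)
  also have "\<dots> \<le> (Q / T) powr ((p - q) / q)" using h1' qp q0 by (intro powr_mono2) auto
  finally have h2: "P \<le> (Q / T) powr ((p - q) / q) * Q" using Q0 by (simp add: mult_right_mono)
  have "P powr (1/p) \<le> ((Q / T) powr ((p - q) / q) * Q) powr (1/p)"
    using P0 h2 qp q0 by (intro powr_mono2) auto
  also have "\<dots> = (Q / T) powr ((p - q) / q / p) * Q powr (1/p)"
    using Q0 T0 by (simp add: powr_mult powr_powr)
  also have "\<dots> = Q powr ((p - q) / q / p) * Q powr (1/p) / T powr ((p - q) / q / p)"
    using Q0 T0 by (simp add: powr_divide)
  also have "\<dots> = Q powr (1/q) / T powr ((p - q) / q / p)"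
  proof -
    have "(p - q) / q / p + 1/p = 1/q" using q0 qp by (simp add: field_simps)
    then show ?thesis by (simp add: powr_add[symmetric])
  qed
  also have "\<dots> = T powr (1/p - 1/q) * Q powr (1/q)"
  proof -
    have "1/p - 1/q = - ((p - q) / q / p)" using q0 qp by (simp add: field_simps)
    then show ?thesis using T0 by (simp add: powr_minus divide_inverse mult.commute)
  qed
  finally show ?thesis unfolding P_def Q_def .
qed


lemma term_id:
  fixes w n p :: real
  assumes "w > 0" "n \<ge> 0"
  shows "w powr (2 - p) * n powr p = w\<^sup>2 * (n / w) powr p"
  using assms by (simp add: powr_divide powr_diff powr_numeral)

theorem mainTheorem1:
  fixes N B :: nat and blk :: "nat \<Rightarrow> nat set" and nrm :: "(nat \<Rightarrow> real) \<Rightarrow> real"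
    and \<omega> x :: "nat \<Rightarrow> real" and \<pi> :: "nat \<Rightarrow> nat" and s p q :: real
  assumes "block_partition N B blk"
    and "is_norm_on N nrm"
    and "\<forall>b<B. \<omega> b \<ge> 1"
    and "is_vec N x"
    and "s > (winf B \<omega>)\<^sup>2"
    and "0 < q" and "q < p" and "p \<le> 2"
    and "sorting_perm B blk nrm \<omega> x \<pi>"
  shows "sigma_best N B blk nrm \<omega> p s x \<le> sigma_quasi B blk nrm \<omega> \<pi> p s x
       \<and> sigma_quasi B blk nrm \<omega> \<pi> p s x
           \<le> (s - (winf B \<omega>)\<^sup>2) powr (1 / p - 1 / q) * wnorm B blk nrm \<omega> q x"
proof -
  note bp = assms(1) and nn = assms(2) and w1 = assms(3) and xv = assms(4) and sw = assms(5)
    and q0 = assms(6) and qp = assms(7) and sp = assms(9)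
  have disj: "\<And>b c. b < B \<Longrightarrow> c < B \<Longrightarrow> b \<noteq> c \<Longrightarrow> blk b \<inter> blk c = {}"
    using bp unfolding block_partition_def by blast
  have bij: "bij_betw \<pi> {..<B} {..<B}" using sp unfolding sorting_perm_def by blast
  have pimap: "\<And>i. i < B \<Longrightarrow> \<pi> i < B" using bij bij_betw_apply by fastforce
  have piinj: "inj_on \<pi> {..<B}" using bij bij_betw_def by blast
  have srt: "\<And>i j. i \<le> j \<Longrightarrow> j < B \<Longrightarrow>
        nrm (blockv blk (\<pi> j) x) / \<omega> (\<pi> j) \<le> nrm (blockv blk (\<pi> i) x) / \<omega> (\<pi> i)"
    using sp unfolding sorting_perm_def by blast
  have vec_restr: "\<And>S v. is_vec N v \<Longrightarrow> is_vec N (restr blk S v)"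
    unfolding is_vec_def restr_def by auto
  have nrm0: "\<And>v. is_vec N v \<Longrightarrow> nrm v \<ge> 0" using nn unfolding is_norm_on_def by blast
  have nrmz: "nrm (\<lambda>_. 0) = 0" using nn unfolding is_norm_on_def is_vec_def by simp
  define K where "K = {k. k \<le> B \<and> (\<Sum>i<k. (\<omega> (\<pi> i))\<^sup>2) \<le> s}"
  define k where "k = k_s B \<omega> \<pi> s"
  have finK: "finite K" unfolding K_def by (rule finite_subset[of _ "{..B}"]) auto
  have "0 \<in> K" unfolding K_def using sw by (auto intro: less_imp_le[OF le_less_trans[OF zero_le_power2]])
  hence kK: "k \<in> K" and kmax: "\<And>j. j \<in> K \<Longrightarrow> j \<le> k"
    using finK unfolding k_def k_s_def K_def[symmetric] by (auto intro: Max_in)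
  have kB: "k \<le> B" and ksum: "(\<Sum>i<k. (\<omega> (\<pi> i))\<^sup>2) \<le> s" using kK unfolding K_def by auto
  define S where "S = \<pi> ` {..<k}"
  define z where "z = restr blk S x"
  have SB: "S \<subseteq> {..<B}" unfolding S_def using kB pimap by auto
  have zv: "is_vec N z" unfolding z_def using xv vec_restr by blast
  have notS_block: "\<And>b. b < B \<Longrightarrow> b \<notin> S \<Longrightarrow> blockv blk b z = (\<lambda>_. 0)"
  proof
    fix b i assume b: "b < B" "b \<notin> S"
    show "blockv blk b z i = 0"
    proof (cases "i \<in> blk b")
      case True
      have "\<not> (\<exists>c\<in>S. i \<in> blk c)"
      proof
        assume "\<exists>c\<in>S. i \<in> blk c"
        then obtain c where "c \<in> S" "i \<in> blk c" by blast
        then show False using disj[of b c] b SB True by auto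
      qed
      then show ?thesis unfolding blockv_def restr_def z_def by auto
    qed (simp add: blockv_def restr_def)
  qed
  have spars: "wsparsity B blk \<omega> z \<le> s"
  proof -
    have "{b. b < B \<and> blockv blk b z \<noteq> (\<lambda>_. 0)} \<subseteq> S" using notS_block by blast
    hence "wsparsity B blk \<omega> z \<le> wset \<omega> S" unfolding wsparsity_def wset_def
      using SB by (intro sum_mono2) (auto intro: finite_subset)
    also have "wset \<omega> S = (\<Sum>i<k. (\<omega> (\<pi> i))\<^sup>2)" unfolding wset_def S_def
      using piinj kB by (subst sum.reindex) (auto intro: inj_on_subset)
    finally show ?thesis using ksum by linarith
  qed
  have quasi: "sigma_quasi B blk nrm \<omega> \<pi> p s x = wnorm B blk nrm \<omega> p (\<lambda>i. x i - z i)"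
    unfolding sigma_quasi_def z_def S_def k_def Let_def by simp
  have part1: "sigma_best N B blk nrm \<omega> p s x \<le> sigma_quasi B blk nrm \<omega> \<pi> p s x"
    unfolding sigma_best_def quasi
  proof (rule cInf_lower)
    show "wnorm B blk nrm \<omega> p (\<lambda>i. x i - z i) \<in>
      {wnorm B blk nrm \<omega> p (\<lambda>i. x i - z i) |z. is_vec N z \<and> wsparsity B blk \<omega> z \<le> s}"
      using zv spars by blast
    show "bdd_below {wnorm B blk nrm \<omega> p (\<lambda>i. x i - z i) |z. is_vec N z \<and> wsparsity B blk \<omega> z \<le> s}"
      by (rule bdd_belowI[of _ 0]) (auto simp: wnorm_def)
  qed
  define c where "c i = (\<omega> (\<pi> i))\<^sup>2" for i
  define a where "a i = nrm (blockv blk (\<pi> i) x) / \<omega> (\<pi> i)" for i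
  have wpos: "\<And>i. i < B \<Longrightarrow> \<omega> (\<pi> i) > 0" using w1 pimap by (meson less_le_trans zero_less_one)
  have blkvec: "\<And>b v. is_vec N v \<Longrightarrow> is_vec N (blockv blk b v)" unfolding blockv_def using vec_restr by blast
  have ids: "\<And>i r. i < B \<Longrightarrow> \<omega> (\<pi> i) powr (2 - r) * nrm (blockv blk (\<pi> i) x) powr r = c i * a i powr r"
    unfolding a_def c_def using wpos nrm0 blkvec xv by (intro term_id) auto
  have cpos: "\<forall>i<B. c i > 0" unfolding c_def using wpos by (simp add: power2_eq_square)
  have anon: "\<forall>i<B. a i \<ge> 0" unfolding a_def using wpos nrm0 blkvec xv by (auto intro: divide_nonneg_pos)
  have amono: "\<forall>i j. i \<le> j \<longrightarrow> j < B \<longrightarrow> a j \<le> a i" unfolding a_def using srt by blast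
  have reidx: "\<And>f. (\<Sum>b<B. f b) = (\<Sum>i<B. f (\<pi> i))"
    by (rule sym, rule sum.reindex_bij_betw[OF bij])
  have Qeq: "wnorm B blk nrm \<omega> q x = (\<Sum>i<B. c i * a i powr q) powr (1/q)"
    unfolding wnorm_def by (subst reidx) (simp add: ids)
  have diffblk: "\<And>i. i < B \<Longrightarrow> blockv blk (\<pi> i) (\<lambda>j. x j - z j) =
      (if i < k then (\<lambda>_. 0) else blockv blk (\<pi> i) x)"
  proof -
    fix i assume iB: "i < B"
    show "blockv blk (\<pi> i) (\<lambda>j. x j - z j) = (if i < k then (\<lambda>_. 0) else blockv blk (\<pi> i) x)"
    proof (cases "i < k")
      case True
      then have "\<pi> i \<in> S" unfolding S_def by auto
      then have zx: "z j = x j" if "j \<in> blk (\<pi> i)" for j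
      proof -
        have "\<exists>b\<in>S. j \<in> blk b" using \<open>\<pi> i \<in> S\<close> that by blast
        then show ?thesis unfolding z_def restr_def by simp
      qed
      have "blockv blk (\<pi> i) (\<lambda>j. x j - z j) j = 0" for j
        by (cases "j \<in> blk (\<pi> i)") (simp_all add: blockv_def restr_def zx)
      then show ?thesis using True by auto
    next
      case False
      have "\<pi> i \<notin> S"
      proof
        assume "\<pi> i \<in> S"
        then obtain j where j: "j < k" "\<pi> i = \<pi> j" unfolding S_def by auto
        then have "j < B" using kB by linarith
        then have "i = j" using piinj iB j(2) unfolding inj_on_def by blast
        then show False using False j(1) by simp
      qed
      then have zb0: "blockv blk (\<pi> i) z = (\<lambda>_. 0)" using notS_block pimap iB by blast
      have zb: "z j = 0" if "j \<in> blk (\<pi> i)" for j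
      proof -
        have "blockv blk (\<pi> i) z j = 0" by (simp add: zb0)
        then show ?thesis using that by (simp add: blockv_def restr_def)
      qed
      have "blockv blk (\<pi> i) (\<lambda>j. x j - z j) j = blockv blk (\<pi> i) x j" for j
        by (cases "j \<in> blk (\<pi> i)") (simp_all add: blockv_def restr_def zb)
      then show ?thesis using False by auto
    qed
  qed
  have Peq: "wnorm B blk nrm \<omega> p (\<lambda>i. x i - z i) = (\<Sum>i\<in>{k..<B}. c i * a i powr p) powr (1/p)"
  proof -
    have "(\<Sum>i<B. \<omega> (\<pi> i) powr (2 - p) * nrm (blockv blk (\<pi> i) (\<lambda>j. x j - z j)) powr p)
        = (\<Sum>i<B. if i < k then 0 else c i * a i powr p)"
      using diffblk ids nrmz by (intro sum.cong) auto
    also have "\<dots> = (\<Sum>i\<in>{k..<B}. c i * a i powr p)"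
      by (rule sum.mono_neutral_cong_right) auto
    finally show ?thesis unfolding wnorm_def by (subst reidx) simp
  qed
  have part2: "sigma_quasi B blk nrm \<omega> \<pi> p s x
           \<le> (s - (winf B \<omega>)\<^sup>2) powr (1 / p - 1 / q) * wnorm B blk nrm \<omega> q x"
  proof (cases "k < B")
    case True
    have "Suc k \<notin> K" using kmax by fastforce
    hence "(\<Sum>i<Suc k. c i) > s" using True unfolding K_def c_def by auto
    hence T: "s - (winf B \<omega>)\<^sup>2 \<le> (\<Sum>i\<le>k. c i)" using lessThan_Suc_atMost[of k]
      by (smt (verit) zero_le_power2)
    show ?thesis using tail_bound[OF True cpos anon amono _ T q0 qp] sw quasi Peq Qeq by simp
  next
    case False
    hence "k = B" using kB by simp
    then show ?thesis using quasi Peq Qeq by simp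
  qed
  show ?thesis using part1 part2 by blast
qed

end
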